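(* Let $R>0$ and $\alpha_0\in(0,\frac{3}{4R})$, and define $\{\alpha_k\}_{k\ge0}$ by $$\alpha_{k+1}=\alpha_k\left(1-\frac{1}{(k+1)(k+3)}\,\frac{\alpha_k^2R^2}{1-\alpha_k^2R^2}\right),\qquad k\ge 0.$$ Then $\{\alpha_k\}_{k\ge0}$ is well defined, monotonically decreasing, and converges to a positive limit. In particular, when $\alpha_0=\frac{0.618}{R}$, one has $\lim_{k\to\infty}\alpha_k\approx\frac{0.437}{R}$. *)

theory Defs
  imports "HOL-Analysis.Analysis"
begin

primrec alpha_seq :: "real \<Rightarrow> real \<Rightarrow> nat \<Rightarrow> real" where
  "alpha_seq R a0 0 = a0"
| "alpha_seq R a0 (Suc k) =
     alpha_seq R a0 k * (1 - 1 / ((real k + 1) * (real k + 3)) *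
       ((alpha_seq R a0 k)^2 * R^2 / (1 - (alpha_seq R a0 k)^2 * R^2)))"

end

theory Submission
  imports Defs "HOL-Real_Asymp.Real_Asymp"
begin

definition cf :: "real \<Rightarrow> real" where "cf t = t^2 / (1 - t^2)"
definition ak :: "nat \<Rightarrow> real" where "ak k = 1 / ((real k + 1) * (real k + 3))"
definition Sk :: "nat \<Rightarrow> real" where "Sk k = (1 / (real k + 1) + 1 / (real k + 2)) / 2"

abbreviation X :: "real \<Rightarrow> nat \<Rightarrow> real" where "X b k \<equiv> alpha_seq 1 b k"

lemma X_rec: "X b (Suc k) = X b k * (1 - ak k * cf (X b k))"
  by (simp add: ak_def cf_def)

declare alpha_seq.simps(2)[simp del]

lemma cf_mono:
  assumes "0 \<le> s" "s \<le> t" "t < 1"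
  shows "cf s \<le> cf t"
proof -
  have "s^2 \<le> t^2" using assms by (simp add: power_mono)
  moreover have "t^2 < 1" using assms by (simp add: power_less_one_iff abs_square_less_1)
  ultimately show ?thesis unfolding cf_def
    by (intro frac_le) auto
qed

lemma cf_nonneg: "0 \<le> t \<Longrightarrow> t < 1 \<Longrightarrow> 0 \<le> cf t"
  using cf_mono[of 0 t] by (simp add: cf_def)

lemma cf_lt: assumes "0 \<le> t" "t < 3/4" shows "cf t < 9/7"
proof -
  have "t^2 < (3/4)^2" using assms by (intro power_strict_mono) auto
  moreover have "(3/4::real)^2 = 9/16" by (simp add: power2_eq_square)
  ultimately have t2: "t^2 < 9/16" by linarith
  then have "0 < 1 - t^2" by simp
  then show ?thesis unfolding cf_def using t2 by (simp add: divide_less_eq)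
qed

lemma ak_pos: "0 < ak k" by (simp add: ak_def)
lemma ak_le: "ak k \<le> 1/3"
proof -
  have "1 * 3 \<le> (real k + 1) * (real k + 3)" by (intro mult_mono) auto
  then show ?thesis unfolding ak_def by (intro divide_left_mono) auto
qed
lemma ak_S: "ak k = Sk k - Sk (Suc k)"
proof -
  define x where "x = real k"
  have h: "real (Suc k) + 1 = x + 2" "real (Suc k) + 2 = x + 3" "real k = x" by (simp_all add: x_def)
  have p: "0 < x+1" "0 < x+2" "0<x+3" by (simp_all add: x_def)
  have "1/(x+1) - 1/(x+3) = 2/((x+1)*(x+3))" using p by (simp add: divide_simps)
  then show ?thesis unfolding ak_def Sk_def h by (simp add: algebra_simps)
qed
lemma Sk_nonneg: "0 \<le> Sk k" by (simp add: Sk_def)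
lemma Sk_anti: "N \<le> k \<Longrightarrow> Sk k \<le> Sk N"
proof (induction k rule: dec_induct)
  case base then show ?case by simp
next
  case (step k) then show ?case using ak_S[of k] ak_pos[of k] by linarith
qed

lemma X_basic:
  assumes "0 < b" "b < 3/4"
  shows "0 < X b k \<and> X b k \<le> b"
proof (induction k)
  case 0 then show ?case using assms by simp
next
  case (Suc k)
  have c: "0 \<le> cf (X b k)" "cf (X b k) < 9/7" using Suc assms cf_nonneg[of "X b k"] cf_lt[of "X b k"] by auto
  have "ak k * cf (X b k) \<le> 1/3 * cf (X b k)" using ak_le c by (intro mult_right_mono) auto
  then have f1: "ak k * cf (X b k) < 1" using c by linarith
  have f2: "0 \<le> ak k * cf (X b k)" using ak_pos[of k] c by (intro mult_nonneg_nonneg) auto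
  have A: "0 < X b k * (1 - ak k * cf (X b k))" using Suc f1 by simp
  have B: "X b k * (1 - ak k * cf (X b k)) \<le> X b k * 1" using Suc f2
    by (intro mult_left_mono) auto
  have e: "X b (Suc k) = X b k * (1 - ak k * cf (X b k))" by (rule X_rec)
  show ?case unfolding e using A B Suc.IH by linarith
qed

lemma X_dec:
  assumes "0 < b" "b < 3/4"
  shows "X b (Suc k) \<le> X b k"
proof -
  have c: "0 \<le> cf (X b k)" using X_basic[OF assms, of k] assms cf_nonneg[of "X b k"] by auto
  have f2: "0 \<le> ak k * cf (X b k)" using ak_pos[of k] c by (intro mult_nonneg_nonneg) auto
  show ?thesis using X_basic[OF assms, of k] f2 X_rec[of b k]
    by (simp add: mult_le_cancel_left1)
qed

lemma X_decseq: "0 < b \<Longrightarrow> b < 3/4 \<Longrightarrow> decseq (X b)"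
  by (rule decseq_SucI) (rule X_dec)

lemma X_lower:
  assumes "0 < b" "b < 3/4" "0 \<le> cc" "\<forall>k\<ge>N. cf (X b k) \<le> cc" "cc * Sk N \<le> 1" "N \<le> k"
  shows "X b N * (1 - cc * Sk N) \<le> X b k"
proof -
  have P: "X b N * (1 - cc * Sk N) \<le> X b k * (1 - cc * Sk k)" using assms(6)
  proof (induction k rule: dec_induct)
    case base then show ?case by simp
  next
    case (step k)
    have pos: "0 < X b k" using X_basic[OF assms(1,2)] by simp
    have h1: "1 - ak k * cc \<le> 1 - ak k * cf (X b k)"
      using assms(4) step ak_pos[of k] by (simp add: mult_left_mono)
    have "cc * Sk (Suc k) \<le> cc * Sk N" using Sk_anti[of N "Suc k"] step assms(3)
      by (simp add: mult_left_mono)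
    then have h2: "0 \<le> 1 - cc * Sk (Suc k)" using assms(5) by linarith
    have "X b k * (1 - ak k * cc) * (1 - cc * Sk (Suc k))
        \<le> X b k * (1 - ak k * cf (X b k)) * (1 - cc * Sk (Suc k))"
      using h1 h2 pos by (intro mult_right_mono mult_left_mono) auto
    also have "\<dots> = X b (Suc k) * (1 - cc * Sk (Suc k))" using X_rec[of b k] by simp
    finally have A: "X b k * (1 - ak k * cc) * (1 - cc * Sk (Suc k)) \<le> X b (Suc k) * (1 - cc * Sk (Suc k))" .
    have "0 \<le> X b k * (ak k * cc * (cc * Sk (Suc k)))"
      using pos ak_pos[of k] assms(3) Sk_nonneg[of "Suc k"] by simp
    moreover have "X b k * (1 - ak k * cc) * (1 - cc * Sk (Suc k)) = X b k * (1 - cc * Sk k) + X b k * (ak k * cc * (cc * Sk (Suc k)))"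
      using ak_S[of k] by (simp add: ak_S[of k] algebra_simps)
    ultimately have "X b k * (1 - cc * Sk k) \<le> X b k * (1 - ak k * cc) * (1 - cc * Sk (Suc k))"
      by linarith
    then show ?case using step A by linarith
  qed
  have "X b k * (1 - cc * Sk k) \<le> X b k"
    using X_basic[OF assms(1,2), of k] assms(3) Sk_nonneg[of k]
    by (simp add: mult_le_cancel_left1)
  then show ?thesis using P by linarith
qed

lemma X_upper:
  assumes "0 < b" "b < 3/4" "0 \<le> cl" "\<forall>k\<ge>N. cl \<le> cf (X b k)" "N \<le> k"
  shows "X b k \<le> X b N / (1 + cl * Sk N) * (1 + cl * Sk k)"
proof -
  have Q: "X b k / (1 + cl * Sk k) \<le> X b N / (1 + cl * Sk N)" using assms(5)
  proof (induction k rule: dec_induct)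
    case base then show ?case by simp
  next
    case (step k)
    have pos: "0 < X b k" using X_basic[OF assms(1,2)] by simp
    have d1: "0 < 1 + cl * Sk k" "0 < 1 + cl * Sk (Suc k)"
      using assms(3) Sk_nonneg[of k] Sk_nonneg[of "Suc k"] by (simp_all add: add_pos_nonneg)
    have h1: "1 - ak k * cf (X b k) \<le> 1 - ak k * cl"
      using assms(4) step ak_pos[of k] by (simp add: mult_left_mono)
    have h3: "0 \<le> 1 + cl * Sk k" using d1 by simp
    have "X b (Suc k) * (1 + cl * Sk k) = X b k * (1 - ak k * cf (X b k)) * (1 + cl * Sk k)"
      using X_rec[of b k] by simp
    also have "\<dots> \<le> X b k * (1 - ak k * cl) * (1 + cl * Sk k)"
      using h1 h3 pos by (intro mult_right_mono mult_left_mono) auto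
    also have "\<dots> \<le> X b k * (1 + cl * Sk (Suc k))"
    proof -
      have "0 \<le> X b k * (ak k * cl * (cl * Sk k))"
        using pos ak_pos[of k] assms(3) Sk_nonneg[of k] by simp
      moreover have "X b k * (1 - ak k * cl) * (1 + cl * Sk k) = X b k * (1 + cl * Sk (Suc k)) - X b k * (ak k * cl * (cl * Sk k))"
        using ak_S[of k] by (simp add: ak_S[of k] algebra_simps)
      ultimately show ?thesis by linarith
    qed
    finally have "X b (Suc k) * (1 + cl * Sk k) \<le> X b k * (1 + cl * Sk (Suc k))" .
    then have "X b (Suc k) / (1 + cl * Sk (Suc k)) \<le> X b k / (1 + cl * Sk k)"
      using d1 by (simp add: divide_simps)
    then show ?case using step by linarith
  qed
  have d: "0 < 1 + cl * Sk k" using assms(3) Sk_nonneg[of k] by (simp add: add_pos_nonneg)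
  have "X b k / (1 + cl * Sk k) * (1 + cl * Sk k) \<le> X b N / (1 + cl * Sk N) * (1 + cl * Sk k)"
    using Q d by (intro mult_right_mono) auto
  then show ?thesis using d by simp
qed

lemma Sk_lim: "Sk \<longlonglongrightarrow> 0"
  unfolding Sk_def by real_asymp

lemma step_bnd:
  assumes "0 \<le> lo" "lo \<le> X b k" "X b k \<le> hi" "hi < 1" "ak k * cf hi \<le> 1"
    "lo' \<le> lo * (1 - ak k * cf hi)" "hi * (1 - ak k * cf lo) \<le> hi'"
  shows "lo' \<le> X b (Suc k) \<and> X b (Suc k) \<le> hi'"
proof -
  have c1: "cf lo \<le> cf (X b k)" using assms by (intro cf_mono) auto
  have c2: "cf (X b k) \<le> cf hi" using assms by (intro cf_mono) auto
  have f1: "1 - ak k * cf hi \<le> 1 - ak k * cf (X b k)" using c2 ak_pos[of k] by (simp add: mult_left_mono)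
  have f2: "1 - ak k * cf (X b k) \<le> 1 - ak k * cf lo" using c1 ak_pos[of k] by (simp add: mult_left_mono)
  have f0: "0 \<le> 1 - ak k * cf hi" using assms by simp
  have "lo * (1 - ak k * cf hi) \<le> X b k * (1 - ak k * cf (X b k))"
    using f1 f0 assms by (intro mult_mono) auto
  moreover have "X b k * (1 - ak k * cf (X b k)) \<le> hi * (1 - ak k * cf lo)"
    using f2 f1 f0 assms by (intro mult_mono) auto
  ultimately show ?thesis using assms X_rec[of b k] by auto
qed

definition b0 :: real where "b0 = 0.618"

lemma bnd0: "(0.6180000000::real) \<le> X b0 0 \<and> X b0 0 \<le> 0.6180000000"
  by (simp add: b0_def)

lemma bnd1: "(0.4907076540::real) \<le> X b0 1 \<and> X b0 1 \<le> 0.4907076541"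
proof -
  have h: "(0.6180000000::real) \<le> X b0 0 \<and> X b0 0 \<le> 0.6180000000" by (rule bnd0)
  have "(0.4907076540::real) \<le> X b0 (Suc 0) \<and> X b0 (Suc 0) \<le> 0.4907076541"
    by (rule step_bnd[OF _ conjunct1[OF h] conjunct2[OF h]]) (simp_all add: ak_def cf_def field_simps)
  then show ?thesis by (simp)
qed

lemma bnd2: "(0.4712532075::real) \<le> X b0 2 \<and> X b0 2 \<le> 0.4712532077"
proof -
  have h: "(0.4907076540::real) \<le> X b0 1 \<and> X b0 1 \<le> 0.4907076541" by (rule bnd1)
  have "(0.4712532075::real) \<le> X b0 (Suc 1) \<and> X b0 (Suc 1) \<le> 0.4712532077"
    by (rule step_bnd[OF _ conjunct1[OF h] conjunct2[OF h]]) (simp_all add: ak_def cf_def field_simps)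
  then show ?thesis by (simp add: numeral_2_eq_2)
qed

lemma bnd3: "(0.4622843622::real) \<le> X b0 3 \<and> X b0 3 \<le> 0.4622843625"
proof -
  have h: "(0.4712532075::real) \<le> X b0 2 \<and> X b0 2 \<le> 0.4712532077" by (rule bnd2)
  have "(0.4622843622::real) \<le> X b0 (Suc 2) \<and> X b0 (Suc 2) \<le> 0.4622843625"
    by (rule step_bnd[OF _ conjunct1[OF h] conjunct2[OF h]]) (simp_all add: ak_def cf_def field_simps)
  then show ?thesis by (simp)
qed

lemma bnd4: "(0.4570491792::real) \<le> X b0 4 \<and> X b0 4 \<le> 0.4570491796"
proof -
  have h: "(0.4622843622::real) \<le> X b0 3 \<and> X b0 3 \<le> 0.4622843625" by (rule bnd3)
  have "(0.4570491792::real) \<le> X b0 (Suc 3) \<and> X b0 (Suc 3) \<le> 0.4570491796"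
    by (rule step_bnd[OF _ conjunct1[OF h] conjunct2[OF h]]) (simp_all add: ak_def cf_def field_simps)
  then show ?thesis by (simp)
qed

lemma bnd5: "(0.4536010299::real) \<le> X b0 5 \<and> X b0 5 \<le> 0.4536010304"
proof -
  have h: "(0.4570491792::real) \<le> X b0 4 \<and> X b0 4 \<le> 0.4570491796" by (rule bnd4)
  have "(0.4536010299::real) \<le> X b0 (Suc 4) \<and> X b0 (Suc 4) \<le> 0.4536010304"
    by (rule step_bnd[OF _ conjunct1[OF h] conjunct2[OF h]]) (simp_all add: ak_def cf_def field_simps)
  then show ?thesis by (simp)
qed

lemma bnd6: "(0.4511529489::real) \<le> X b0 6 \<and> X b0 6 \<le> 0.4511529496"
proof -
  have h: "(0.4536010299::real) \<le> X b0 5 \<and> X b0 5 \<le> 0.4536010304" by (rule bnd5)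
  have "(0.4511529489::real) \<le> X b0 (Suc 5) \<and> X b0 (Suc 5) \<le> 0.4511529496"
    by (rule step_bnd[OF _ conjunct1[OF h] conjunct2[OF h]]) (simp_all add: ak_def cf_def field_simps)
  then show ?thesis by (simp)
qed

lemma bnd7: "(0.4493228846::real) \<le> X b0 7 \<and> X b0 7 \<le> 0.4493228854"
proof -
  have h: "(0.4511529489::real) \<le> X b0 6 \<and> X b0 6 \<le> 0.4511529496" by (rule bnd6)
  have "(0.4493228846::real) \<le> X b0 (Suc 6) \<and> X b0 (Suc 6) \<le> 0.4493228854"
    by (rule step_bnd[OF _ conjunct1[OF h] conjunct2[OF h]]) (simp_all add: ak_def cf_def field_simps)
  then show ?thesis by (simp)
qed

lemma bnd8: "(0.4479021156::real) \<le> X b0 8 \<and> X b0 8 \<le> 0.4479021165"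
proof -
  have h: "(0.4493228846::real) \<le> X b0 7 \<and> X b0 7 \<le> 0.4493228854" by (rule bnd7)
  have "(0.4479021156::real) \<le> X b0 (Suc 7) \<and> X b0 (Suc 7) \<le> 0.4479021165"
    by (rule step_bnd[OF _ conjunct1[OF h] conjunct2[OF h]]) (simp_all add: ak_def cf_def field_simps)
  then show ?thesis by (simp)
qed

lemma bnd9: "(0.4467666895::real) \<le> X b0 9 \<and> X b0 9 \<le> 0.4467666905"
proof -
  have h: "(0.4479021156::real) \<le> X b0 8 \<and> X b0 8 \<le> 0.4479021165" by (rule bnd8)
  have "(0.4467666895::real) \<le> X b0 (Suc 8) \<and> X b0 (Suc 8) \<le> 0.4467666905"
    by (rule step_bnd[OF _ conjunct1[OF h] conjunct2[OF h]]) (simp_all add: ak_def cf_def field_simps)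
  then show ?thesis by (simp)
qed

lemma bnd10: "(0.4458382485::real) \<le> X b0 10 \<and> X b0 10 \<le> 0.4458382496"
proof -
  have h: "(0.4467666895::real) \<le> X b0 9 \<and> X b0 9 \<le> 0.4467666905" by (rule bnd9)
  have "(0.4458382485::real) \<le> X b0 (Suc 9) \<and> X b0 (Suc 9) \<le> 0.4458382496"
    by (rule step_bnd[OF _ conjunct1[OF h] conjunct2[OF h]]) (simp_all add: ak_def cf_def field_simps)
  then show ?thesis by (simp)
qed

lemma bnd11: "(0.4450647852::real) \<le> X b0 11 \<and> X b0 11 \<le> 0.4450647864"
proof -
  have h: "(0.4458382485::real) \<le> X b0 10 \<and> X b0 10 \<le> 0.4458382496" by (rule bnd10)
  have "(0.4450647852::real) \<le> X b0 (Suc 10) \<and> X b0 (Suc 10) \<le> 0.4450647864"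
    by (rule step_bnd[OF _ conjunct1[OF h] conjunct2[OF h]]) (simp_all add: ak_def cf_def field_simps)
  then show ?thesis by (simp)
qed

lemma bnd12: "(0.4444104039::real) \<le> X b0 12 \<and> X b0 12 \<le> 0.4444104052"
proof -
  have h: "(0.4450647852::real) \<le> X b0 11 \<and> X b0 11 \<le> 0.4450647864" by (rule bnd11)
  have "(0.4444104039::real) \<le> X b0 (Suc 11) \<and> X b0 (Suc 11) \<le> 0.4444104052"
    by (rule step_bnd[OF _ conjunct1[OF h] conjunct2[OF h]]) (simp_all add: ak_def cf_def field_simps)
  then show ?thesis by (simp)
qed

lemma bnd13: "(0.4438495195::real) \<le> X b0 13 \<and> X b0 13 \<le> 0.4438495209"
proof -
  have h: "(0.4444104039::real) \<le> X b0 12 \<and> X b0 12 \<le> 0.4444104052" by (rule bnd12)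
  have "(0.4438495195::real) \<le> X b0 (Suc 12) \<and> X b0 (Suc 12) \<le> 0.4438495209"
    by (rule step_bnd[OF _ conjunct1[OF h] conjunct2[OF h]]) (simp_all add: ak_def cf_def field_simps)
  then show ?thesis by (simp)
qed

lemma bnd14: "(0.4433633978::real) \<le> X b0 14 \<and> X b0 14 \<le> 0.4433633993"
proof -
  have h: "(0.4438495195::real) \<le> X b0 13 \<and> X b0 13 \<le> 0.4438495209" by (rule bnd13)
  have "(0.4433633978::real) \<le> X b0 (Suc 13) \<and> X b0 (Suc 13) \<le> 0.4433633993"
    by (rule step_bnd[OF _ conjunct1[OF h] conjunct2[OF h]]) (simp_all add: ak_def cf_def field_simps)
  then show ?thesis by (simp)
qed

lemma bnd15: "(0.4429380032::real) \<le> X b0 15 \<and> X b0 15 \<le> 0.4429380048"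
proof -
  have h: "(0.4433633978::real) \<le> X b0 14 \<and> X b0 14 \<le> 0.4433633993" by (rule bnd14)
  have "(0.4429380032::real) \<le> X b0 (Suc 14) \<and> X b0 (Suc 14) \<le> 0.4429380048"
    by (rule step_bnd[OF _ conjunct1[OF h] conjunct2[OF h]]) (simp_all add: ak_def cf_def field_simps)
  then show ?thesis by (simp)
qed

lemma bnd16: "(0.4425626110::real) \<le> X b0 16 \<and> X b0 16 \<le> 0.4425626127"
proof -
  have h: "(0.4429380032::real) \<le> X b0 15 \<and> X b0 15 \<le> 0.4429380048" by (rule bnd15)
  have "(0.4425626110::real) \<le> X b0 (Suc 15) \<and> X b0 (Suc 15) \<le> 0.4425626127"
    by (rule step_bnd[OF _ conjunct1[OF h] conjunct2[OF h]]) (simp_all add: ak_def cf_def field_simps)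
  then show ?thesis by (simp)
qed

lemma bnd17: "(0.4422288843::real) \<le> X b0 17 \<and> X b0 17 \<le> 0.4422288861"
proof -
  have h: "(0.4425626110::real) \<le> X b0 16 \<and> X b0 16 \<le> 0.4425626127" by (rule bnd16)
  have "(0.4422288843::real) \<le> X b0 (Suc 16) \<and> X b0 (Suc 16) \<le> 0.4422288861"
    by (rule step_bnd[OF _ conjunct1[OF h] conjunct2[OF h]]) (simp_all add: ak_def cf_def field_simps)
  then show ?thesis by (simp)
qed

lemma bnd18: "(0.4419302438::real) \<le> X b0 18 \<and> X b0 18 \<le> 0.4419302457"
proof -
  have h: "(0.4422288843::real) \<le> X b0 17 \<and> X b0 17 \<le> 0.4422288861" by (rule bnd17)
  have "(0.4419302438::real) \<le> X b0 (Suc 17) \<and> X b0 (Suc 17) \<le> 0.4419302457"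
    by (rule step_bnd[OF _ conjunct1[OF h] conjunct2[OF h]]) (simp_all add: ak_def cf_def field_simps)
  then show ?thesis by (simp)
qed

lemma bnd19: "(0.4416614275::real) \<le> X b0 19 \<and> X b0 19 \<le> 0.4416614295"
proof -
  have h: "(0.4419302438::real) \<le> X b0 18 \<and> X b0 18 \<le> 0.4419302457" by (rule bnd18)
  have "(0.4416614275::real) \<le> X b0 (Suc 18) \<and> X b0 (Suc 18) \<le> 0.4416614295"
    by (rule step_bnd[OF _ conjunct1[OF h] conjunct2[OF h]]) (simp_all add: ak_def cf_def field_simps)
  then show ?thesis by (simp)
qed

lemma bnd20: "(0.4414181763::real) \<le> X b0 20 \<and> X b0 20 \<le> 0.4414181784"
proof -
  have h: "(0.4416614275::real) \<le> X b0 19 \<and> X b0 19 \<le> 0.4416614295" by (rule bnd19)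
  have "(0.4414181763::real) \<le> X b0 (Suc 19) \<and> X b0 (Suc 19) \<le> 0.4414181784"
    by (rule step_bnd[OF _ conjunct1[OF h] conjunct2[OF h]]) (simp_all add: ak_def cf_def field_simps)
  then show ?thesis by (simp)
qed

lemma bnd21: "(0.4411970060::real) \<le> X b0 21 \<and> X b0 21 \<le> 0.4411970082"
proof -
  have h: "(0.4414181763::real) \<le> X b0 20 \<and> X b0 20 \<le> 0.4414181784" by (rule bnd20)
  have "(0.4411970060::real) \<le> X b0 (Suc 20) \<and> X b0 (Suc 20) \<le> 0.4411970082"
    by (rule step_bnd[OF _ conjunct1[OF h] conjunct2[OF h]]) (simp_all add: ak_def cf_def field_simps)
  then show ?thesis by (simp)
qed

lemma bnd22: "(0.4409950384::real) \<le> X b0 22 \<and> X b0 22 \<le> 0.4409950407"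
proof -
  have h: "(0.4411970060::real) \<le> X b0 21 \<and> X b0 21 \<le> 0.4411970082" by (rule bnd21)
  have "(0.4409950384::real) \<le> X b0 (Suc 21) \<and> X b0 (Suc 21) \<le> 0.4409950407"
    by (rule step_bnd[OF _ conjunct1[OF h] conjunct2[OF h]]) (simp_all add: ak_def cf_def field_simps)
  then show ?thesis by (simp)
qed

lemma bnd23: "(0.4408098750::real) \<le> X b0 23 \<and> X b0 23 \<le> 0.4408098774"
proof -
  have h: "(0.4409950384::real) \<le> X b0 22 \<and> X b0 22 \<le> 0.4409950407" by (rule bnd22)
  have "(0.4408098750::real) \<le> X b0 (Suc 22) \<and> X b0 (Suc 22) \<le> 0.4408098774"
    by (rule step_bnd[OF _ conjunct1[OF h] conjunct2[OF h]]) (simp_all add: ak_def cf_def field_simps)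
  then show ?thesis by (simp)
qed

lemma bnd24: "(0.4406395010::real) \<le> X b0 24 \<and> X b0 24 \<le> 0.4406395035"
proof -
  have h: "(0.4408098750::real) \<le> X b0 23 \<and> X b0 23 \<le> 0.4408098774" by (rule bnd23)
  have "(0.4406395010::real) \<le> X b0 (Suc 23) \<and> X b0 (Suc 23) \<le> 0.4406395035"
    by (rule step_bnd[OF _ conjunct1[OF h] conjunct2[OF h]]) (simp_all add: ak_def cf_def field_simps)
  then show ?thesis by (simp)
qed

lemma bnd25: "(0.4404822116::real) \<le> X b0 25 \<and> X b0 25 \<le> 0.4404822142"
proof -
  have h: "(0.4406395010::real) \<le> X b0 24 \<and> X b0 24 \<le> 0.4406395035" by (rule bnd24)
  have "(0.4404822116::real) \<le> X b0 (Suc 24) \<and> X b0 (Suc 24) \<le> 0.4404822142"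
    by (rule step_bnd[OF _ conjunct1[OF h] conjunct2[OF h]]) (simp_all add: ak_def cf_def field_simps)
  then show ?thesis by (simp)
qed

lemma bnd26: "(0.4403365544::real) \<le> X b0 26 \<and> X b0 26 \<le> 0.4403365571"
proof -
  have h: "(0.4404822116::real) \<le> X b0 25 \<and> X b0 25 \<le> 0.4404822142" by (rule bnd25)
  have "(0.4403365544::real) \<le> X b0 (Suc 25) \<and> X b0 (Suc 25) \<le> 0.4403365571"
    by (rule step_bnd[OF _ conjunct1[OF h] conjunct2[OF h]]) (simp_all add: ak_def cf_def field_simps)
  then show ?thesis by (simp)
qed

lemma bnd27: "(0.4402012843::real) \<le> X b0 27 \<and> X b0 27 \<le> 0.4402012871"
proof -
  have h: "(0.4403365544::real) \<le> X b0 26 \<and> X b0 26 \<le> 0.4403365571" by (rule bnd26)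
  have "(0.4402012843::real) \<le> X b0 (Suc 26) \<and> X b0 (Suc 26) \<le> 0.4402012871"
    by (rule step_bnd[OF _ conjunct1[OF h] conjunct2[OF h]]) (simp_all add: ak_def cf_def field_simps)
  then show ?thesis by (simp)
qed

lemma bnd28: "(0.4400753281::real) \<le> X b0 28 \<and> X b0 28 \<le> 0.4400753310"
proof -
  have h: "(0.4402012843::real) \<le> X b0 27 \<and> X b0 27 \<le> 0.4402012871" by (rule bnd27)
  have "(0.4400753281::real) \<le> X b0 (Suc 27) \<and> X b0 (Suc 27) \<le> 0.4400753310"
    by (rule step_bnd[OF _ conjunct1[OF h] conjunct2[OF h]]) (simp_all add: ak_def cf_def field_simps)
  then show ?thesis by (simp)
qed

lemma bnd29: "(0.4399577553::real) \<le> X b0 29 \<and> X b0 29 \<le> 0.4399577583"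
proof -
  have h: "(0.4400753281::real) \<le> X b0 28 \<and> X b0 28 \<le> 0.4400753310" by (rule bnd28)
  have "(0.4399577553::real) \<le> X b0 (Suc 28) \<and> X b0 (Suc 28) \<le> 0.4399577583"
    by (rule step_bnd[OF _ conjunct1[OF h] conjunct2[OF h]]) (simp_all add: ak_def cf_def field_simps)
  then show ?thesis by (simp)
qed

lemma bnd30: "(0.4398477556::real) \<le> X b0 30 \<and> X b0 30 \<le> 0.4398477587"
proof -
  have h: "(0.4399577553::real) \<le> X b0 29 \<and> X b0 29 \<le> 0.4399577583" by (rule bnd29)
  have "(0.4398477556::real) \<le> X b0 (Suc 29) \<and> X b0 (Suc 29) \<le> 0.4398477587"
    by (rule step_bnd[OF _ conjunct1[OF h] conjunct2[OF h]]) (simp_all add: ak_def cf_def field_simps)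
  then show ?thesis by (simp)
qed

lemma bnd31: "(0.4397446199::real) \<le> X b0 31 \<and> X b0 31 \<le> 0.4397446231"
proof -
  have h: "(0.4398477556::real) \<le> X b0 30 \<and> X b0 30 \<le> 0.4398477587" by (rule bnd30)
  have "(0.4397446199::real) \<le> X b0 (Suc 30) \<and> X b0 (Suc 30) \<le> 0.4397446231"
    by (rule step_bnd[OF _ conjunct1[OF h] conjunct2[OF h]]) (simp_all add: ak_def cf_def field_simps)
  then show ?thesis by (simp)
qed

lemma bnd32: "(0.4396477249::real) \<le> X b0 32 \<and> X b0 32 \<le> 0.4396477282"
proof -
  have h: "(0.4397446199::real) \<le> X b0 31 \<and> X b0 31 \<le> 0.4397446231" by (rule bnd31)
  have "(0.4396477249::real) \<le> X b0 (Suc 31) \<and> X b0 (Suc 31) \<le> 0.4396477282"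
    by (rule step_bnd[OF _ conjunct1[OF h] conjunct2[OF h]]) (simp_all add: ak_def cf_def field_simps)
  then show ?thesis by (simp)
qed

lemma bnd33: "(0.4395565206::real) \<le> X b0 33 \<and> X b0 33 \<le> 0.4395565240"
proof -
  have h: "(0.4396477249::real) \<le> X b0 32 \<and> X b0 32 \<le> 0.4396477282" by (rule bnd32)
  have "(0.4395565206::real) \<le> X b0 (Suc 32) \<and> X b0 (Suc 32) \<le> 0.4395565240"
    by (rule step_bnd[OF _ conjunct1[OF h] conjunct2[OF h]]) (simp_all add: ak_def cf_def field_simps)
  then show ?thesis by (simp)
qed

lemma bnd34: "(0.4394705198::real) \<le> X b0 34 \<and> X b0 34 \<le> 0.4394705233"
proof -
  have h: "(0.4395565206::real) \<le> X b0 33 \<and> X b0 33 \<le> 0.4395565240" by (rule bnd33)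
  have "(0.4394705198::real) \<le> X b0 (Suc 33) \<and> X b0 (Suc 33) \<le> 0.4394705233"
    by (rule step_bnd[OF _ conjunct1[OF h] conjunct2[OF h]]) (simp_all add: ak_def cf_def field_simps)
  then show ?thesis by (simp)
qed

lemma bnd35: "(0.4393892894::real) \<le> X b0 35 \<and> X b0 35 \<le> 0.4393892930"
proof -
  have h: "(0.4394705198::real) \<le> X b0 34 \<and> X b0 34 \<le> 0.4394705233" by (rule bnd34)
  have "(0.4393892894::real) \<le> X b0 (Suc 34) \<and> X b0 (Suc 34) \<le> 0.4393892930"
    by (rule step_bnd[OF _ conjunct1[OF h] conjunct2[OF h]]) (simp_all add: ak_def cf_def field_simps)
  then show ?thesis by (simp)
qed

lemma bnd36: "(0.4393124431::real) \<le> X b0 36 \<and> X b0 36 \<le> 0.4393124468"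
proof -
  have h: "(0.4393892894::real) \<le> X b0 35 \<and> X b0 35 \<le> 0.4393892930" by (rule bnd35)
  have "(0.4393124431::real) \<le> X b0 (Suc 35) \<and> X b0 (Suc 35) \<le> 0.4393124468"
    by (rule step_bnd[OF _ conjunct1[OF h] conjunct2[OF h]]) (simp_all add: ak_def cf_def field_simps)
  then show ?thesis by (simp)
qed

lemma bnd37: "(0.4392396352::real) \<le> X b0 37 \<and> X b0 37 \<le> 0.4392396390"
proof -
  have h: "(0.4393124431::real) \<le> X b0 36 \<and> X b0 36 \<le> 0.4393124468" by (rule bnd36)
  have "(0.4392396352::real) \<le> X b0 (Suc 36) \<and> X b0 (Suc 36) \<le> 0.4392396390"
    by (rule step_bnd[OF _ conjunct1[OF h] conjunct2[OF h]]) (simp_all add: ak_def cf_def field_simps)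
  then show ?thesis by (simp)
qed

lemma bnd38: "(0.4391705554::real) \<le> X b0 38 \<and> X b0 38 \<le> 0.4391705593"
proof -
  have h: "(0.4392396352::real) \<le> X b0 37 \<and> X b0 37 \<le> 0.4392396390" by (rule bnd37)
  have "(0.4391705554::real) \<le> X b0 (Suc 37) \<and> X b0 (Suc 37) \<le> 0.4391705593"
    by (rule step_bnd[OF _ conjunct1[OF h] conjunct2[OF h]]) (simp_all add: ak_def cf_def field_simps)
  then show ?thesis by (simp)
qed

lemma bnd39: "(0.4391049245::real) \<le> X b0 39 \<and> X b0 39 \<le> 0.4391049285"
proof -
  have h: "(0.4391705554::real) \<le> X b0 38 \<and> X b0 38 \<le> 0.4391705593" by (rule bnd38)
  have "(0.4391049245::real) \<le> X b0 (Suc 38) \<and> X b0 (Suc 38) \<le> 0.4391049285"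
    by (rule step_bnd[OF _ conjunct1[OF h] conjunct2[OF h]]) (simp_all add: ak_def cf_def field_simps)
  then show ?thesis by (simp)
qed

lemma bnd40: "(0.4390424904::real) \<le> X b0 40 \<and> X b0 40 \<le> 0.4390424945"
proof -
  have h: "(0.4391049245::real) \<le> X b0 39 \<and> X b0 39 \<le> 0.4391049285" by (rule bnd39)
  have "(0.4390424904::real) \<le> X b0 (Suc 39) \<and> X b0 (Suc 39) \<le> 0.4390424945"
    by (rule step_bnd[OF _ conjunct1[OF h] conjunct2[OF h]]) (simp_all add: ak_def cf_def field_simps)
  then show ?thesis by (simp)
qed

lemma scale: "alpha_seq R a0 k * R = X (a0 * R) k"
proof (induction k)
  case 0 then show ?case by simp
next
  case (Suc k)
  have e: "X (a0 * R) (Suc k) = X (a0 * R) k * (1 - ak k * cf (X (a0 * R) k))" by (rule X_rec)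
  show ?case unfolding e Suc.IH[symmetric]
    by (simp add: alpha_seq.simps(2) ak_def cf_def power_mult_distrib)
qed

lemma b0_facts: "0 < b0" "b0 < 3/4" by (simp_all add: b0_def)

lemma L_bounds:
  assumes "X b0 \<longlonglongrightarrow> L"
  shows "0.4365 \<le> L \<and> L \<le> 0.4375"
proof -
  have ds: "decseq (X b0)" using X_decseq b0_facts by blast
  have pos: "\<And>k. 0 < X b0 k \<and> X b0 k \<le> b0" using X_basic b0_facts by blast
  define cc where "cc = cf 0.4390424945"
  have cc0: "0 \<le> cc" unfolding cc_def by (rule cf_nonneg) auto
  have ccle: "\<forall>k\<ge>40. cf (X b0 k) \<le> cc"
  proof (intro allI impI)
    fix k :: nat assume "40 \<le> k"
    then have "X b0 k \<le> X b0 40" using ds by (simp add: decseqD)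
    then have "X b0 k \<le> 0.4390424945" using bnd40 by linarith
    then show "cf (X b0 k) \<le> cc" unfolding cc_def using pos[of k] by (intro cf_mono) auto
  qed
  have ccS: "cc * Sk 40 \<le> 1" unfolding cc_def cf_def Sk_def by (simp add: field_simps)
  have lowN: "0.4365 \<le> 0.4390424904 * (1 - cc * Sk 40)" unfolding cc_def cf_def Sk_def by (simp add: field_simps)
  have "0.4390424904 * (1 - cc * Sk 40) \<le> X b0 40 * (1 - cc * Sk 40)"
    using bnd40 ccS by (intro mult_right_mono) auto
  then have lowk: "\<forall>k\<ge>40. 0.4365 \<le> X b0 k"
    using X_lower[OF b0_facts cc0 ccle ccS] lowN by force
  have Llo: "0.4365 \<le> L" by (rule LIMSEQ_le_const[OF assms]) (use lowk in blast)
  define cl where "cl = cf 0.4365"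
  have cl0: "0 \<le> cl" unfolding cl_def by (rule cf_nonneg) auto
  have clle: "\<forall>k\<ge>40. cl \<le> cf (X b0 k)"
  proof (intro allI impI)
    fix k :: nat assume "40 \<le> k"
    have "L \<le> X b0 k" using decseq_ge[OF ds assms] .
    then show "cl \<le> cf (X b0 k)" unfolding cl_def using pos[of k] Llo b0_facts by (intro cf_mono) auto
  qed
  define Q where "Q = X b0 40 / (1 + cl * Sk 40)"
  have up: "\<forall>k\<ge>40. X b0 k \<le> Q * (1 + cl * Sk k)"
    unfolding Q_def using X_upper[OF b0_facts cl0 clle] by blast
  have lim2: "(\<lambda>k. Q * (1 + cl * Sk k)) \<longlonglongrightarrow> Q * (1 + cl * 0)"
    by (intro tendsto_intros Sk_lim)
  have "L \<le> Q * (1 + cl * 0)" by (rule LIMSEQ_le[OF assms lim2]) (use up in blast)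
  then have LQ: "L \<le> Q" by simp
  have d: "0 < 1 + cl * Sk 40" using cl0 Sk_nonneg[of 40] by (simp add: add_pos_nonneg)
  have "Q \<le> 0.4390424945 / (1 + cl * Sk 40)" unfolding Q_def using bnd40 d by (intro divide_right_mono) auto
  also have "\<dots> \<le> 0.4375" unfolding cl_def cf_def Sk_def by (simp add: field_simps)
  finally show ?thesis using LQ Llo by linarith
qed

theorem lemma1:
  fixes R a0 :: real
  assumes "R > 0" and "0 < a0" and "a0 < 3 / (4 * R)"
  shows "(\<forall>k. (alpha_seq R a0 k)^2 * R^2 \<noteq> 1)
       \<and> decseq (alpha_seq R a0)
       \<and> (\<exists>L>0. alpha_seq R a0 \<longlonglongrightarrow> L)
       \<and> (a0 = 0.618 / R \<longrightarrow>
            \<bar>R * lim (alpha_seq R a0) - 0.437\<bar> \<le> 0.0005)"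
proof -
  define b where "b = a0 * R"
  have b0: "0 < b" unfolding b_def using assms by simp
  have b1: "b < 3/4" unfolding b_def using assms by (simp add: less_divide_eq algebra_simps)
  have al: "\<And>k. alpha_seq R a0 k = X b k / R"
    unfolding b_def scale[symmetric] using assms by simp
  have pos: "\<And>k. 0 < X b k \<and> X b k \<le> b" using X_basic b0 b1 by blast
  have C1: "\<forall>k. (alpha_seq R a0 k)^2 * R^2 \<noteq> 1"
  proof
    fix k
    have "(alpha_seq R a0 k)^2 * R^2 = (X b k)^2"
      unfolding b_def scale[symmetric] by (simp add: power_mult_distrib)
    moreover have "(X b k)^2 < 1" using pos[of k] b1 by (simp add: power_less_one_iff abs_square_less_1)
    ultimately show "(alpha_seq R a0 k)^2 * R^2 \<noteq> 1" by simp
  qed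
  have C2: "decseq (alpha_seq R a0)"
  proof (rule decseq_SucI)
    fix k
    show "alpha_seq R a0 (Suc k) \<le> alpha_seq R a0 k"
      unfolding al using X_dec[OF b0 b1, of k] assms by (simp add: divide_right_mono)
  qed
  obtain L where L: "X b \<longlonglongrightarrow> L"
    using decseq_convergent[OF X_decseq[OF b0 b1], of 0] pos by (meson less_imp_le)
  have cfb: "\<forall>k\<ge>0. cf (X b k) \<le> cf b" using pos b0 b1 by (intro allI impI cf_mono) (auto intro: less_imp_le)
  have cfb2: "cf b < 9/7" using cf_lt[of b] b0 b1 by simp
  have S0: "Sk 0 = 3/4" by (simp add: Sk_def)
  have cfS: "cf b * Sk 0 \<le> 1" unfolding S0 using cfb2 by simp
  have cf0: "0 \<le> cf b" using b0 b1 by (intro cf_nonneg) auto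
  have lowb: "\<forall>k. b * (1 - cf b * Sk 0) \<le> X b k"
    using X_lower[OF b0 b1 cf0 cfb cfS] by simp
  have "0 < 1 - cf b * Sk 0" unfolding S0 using cfb2 by simp
  then have bpos: "0 < b * (1 - cf b * Sk 0)" using b0 by simp
  have Lpos: "0 < L"
    using LIMSEQ_le_const[OF L, of "b * (1 - cf b * Sk 0)"] lowb bpos by force
  have La: "alpha_seq R a0 \<longlonglongrightarrow> L / R"
    unfolding al using assms(1) by (auto intro!: tendsto_intros L)
  have C3: "\<exists>L>0. alpha_seq R a0 \<longlonglongrightarrow> L"
    using La Lpos assms by (intro exI[of _ "L / R"]) simp
  have C4: "a0 = 0.618 / R \<longrightarrow> \<bar>R * lim (alpha_seq R a0) - 0.437\<bar> \<le> 0.0005"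
  proof
    assume "a0 = 0.618 / R"
    then have "b = b0" unfolding b_def b0_def using assms by simp
    then have bd: "0.4365 \<le> L \<and> L \<le> 0.4375" using L_bounds L by simp
    have e: "R * lim (alpha_seq R a0) = L" using limI[OF La] assms by simp
    show "\<bar>R * lim (alpha_seq R a0) - 0.437\<bar> \<le> 0.0005" unfolding e abs_le_iff using bd by simp
  qed
  show ?thesis using C1 C2 C3 C4 by blast
qed

end
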